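(* Suppose $X$ has a $\chi^2$ distribution with $\ell$ degrees of freedom, where $\ell\ge3$. Then for every $0<t<\ell-2$, \[ P(X\le t)\le P(X\ge 2\ell-4-t). \] *)

theory Defs
  imports "HOL-Probability.Probability"
begin

definition chi_squared_density :: "nat \<Rightarrow> real \<Rightarrow> real" where
  "chi_squared_density k x =
     (if x > 0 then x powr (real k / 2 - 1) * exp (- x / 2) / (2 powr (real k / 2) * Gamma (real k / 2))
      else 0)"

end

theory Submission
  imports Defs
begin

lemma h_nonneg:
  fixes m x :: real
  assumes "0 < x" "x \<le> m"
  shows "0 \<le> (m/2) * (ln (2*m - x) - ln x) - (m - x)"
proof -
  let ?h = "\<lambda>y::real. (m/2) * (ln (2*m - y) - ln y) - (m - y)"
  have "?h m \<le> ?h x"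
  proof (rule DERIV_nonpos_imp_nonincreasing[OF assms(2)])
    fix y assume y: "x \<le> y" "y \<le> m"
    have y0: "0 < y" "0 < 2*m - y" using y assms by auto
    have D: "DERIV ?h y :> (m/2) * (- 1 / (2*m - y) - 1 / y) + 1"
      using y0 by (auto intro!: derivative_eq_intros simp: field_simps)
    have "(m/2) * (- 1 / (2*m - y) - 1 / y) + 1 = 1 - m*m / (y * (2*m - y))"
      using y0 by (simp add: field_simps)
    also have "\<dots> \<le> 0"
    proof -
      have "m*m - y * (2*m - y) = (m - y)^2" by (simp add: power2_eq_square algebra_simps)
      then have "y * (2*m - y) \<le> m*m" by (smt (verit) zero_le_power2)
      then have "1 \<le> m*m / (y * (2*m - y))" using y0 by (simp add: field_simps)
      then show ?thesis by simp
    qed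
    finally show "\<exists>d. DERIV ?h y :> d \<and> d \<le> 0" using D by blast
  qed
  then show ?thesis by simp
qed

lemma aux_lin: "0 \<le> (A::real) - B - (m - x) \<Longrightarrow> B - x/2 \<le> A - (2*m - x)/2"
  unfolding diff_divide_distrib by linarith

lemma dens_le:
  fixes l :: nat and x :: real
  assumes "0 < x" "x \<le> real l - 2"
  shows "chi_squared_density l x \<le> chi_squared_density l (2 * (real l - 2) - x)"
proof -
  define m where "m = real l - 2"
  have xm: "0 < x" "x \<le> m" using assms m_def by auto
  have y0: "0 < 2*m - x" using xm by auto
  have a: "real l / 2 - 1 = m/2" using m_def by simp
  have hn: "0 \<le> (m/2) * (ln (2*m - x) - ln x) - (m - x)" using h_nonneg[OF xm] .
  have "x powr (m/2) * exp (- x / 2) = exp ((m/2) * ln x - x/2)"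
    using xm by (simp add: powr_def exp_add[symmetric] algebra_simps diff_divide_distrib)
  also have "\<dots> \<le> exp ((m/2) * ln (2*m - x) - (2*m - x)/2)"
  proof -
    have "(m/2) * ln x - x/2 \<le> (m/2) * ln (2*m - x) - (2*m - x)/2"
      using hn unfolding right_diff_distrib
      by (rule aux_lin)
    then show ?thesis by simp
  qed
  also have "\<dots> = (2*m - x) powr (m/2) * exp (- (2*m - x) / 2)"
    using y0 by (simp add: powr_def exp_add[symmetric] algebra_simps diff_divide_distrib)
  finally have le: "x powr (m/2) * exp (- x / 2) \<le> (2*m - x) powr (m/2) * exp (- (2*m - x) / 2)" .
  have pos: "0 < 2 powr (real l / 2) * Gamma (real l / 2)"
    using assms by (intro mult_pos_pos Gamma_real_pos) auto
  show ?thesis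
    unfolding chi_squared_density_def a m_def[symmetric]
    using xm y0 le pos by (simp add: divide_right_mono)
qed

theorem lemma2:
  fixes M :: "'a measure" and X :: "'a \<Rightarrow> real" and l :: nat and t :: real
  assumes "prob_space M"
    and "distributed M lborel X (\<lambda>x. ennreal (chi_squared_density l x))"
    and "l \<ge> 3"
    and "0 < t" and "t < real l - 2"
  shows "measure M {\<omega> \<in> space M. X \<omega> \<le> t}
           \<le> measure M {\<omega> \<in> space M. X \<omega> \<ge> 2 * real l - 4 - t}"
proof -
  interpret prob_space M by fact
  define f where "f = (\<lambda>x. ennreal (chi_squared_density l x))"
  define m where "m = real l - 2"
  have dist: "distributed M lborel X f" using assms(2) f_def by simp
  have Xm: "X \<in> measurable M lborel" using distributed_measurable[OF dist] .
  have fm[measurable]: "f \<in> borel_measurable borel"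
    using distributed_borel_measurable[OF dist] by simp
  have D: "distr M lborel X = density lborel f" using distributed_distr_eq_density[OF dist] .
  have em: "emeasure M {\<omega> \<in> space M. X \<omega> \<in> A} = (\<integral>\<^sup>+x. f x * indicator A x \<partial>lborel)"
    if A: "A \<in> sets borel" for A
  proof -
    have "emeasure M {\<omega> \<in> space M. X \<omega> \<in> A} = emeasure (distr M lborel X) A"
      using Xm A by (subst emeasure_distr) (auto intro!: arg_cong2[where f=emeasure])
    also have "\<dots> = (\<integral>\<^sup>+x. f x * indicator A x \<partial>lborel)"
      unfolding D using A by (subst emeasure_density) auto
    finally show ?thesis .
  qed
  have eA: "emeasure M {\<omega> \<in> space M. X \<omega> \<le> t} = (\<integral>\<^sup>+x. f x * indicator {..t} x \<partial>lborel)"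
    using em[of "{..t}"] by simp
  have eB: "emeasure M {\<omega> \<in> space M. X \<omega> \<ge> 2 * real l - 4 - t}
      = (\<integral>\<^sup>+x. f x * indicator {2*m - t..} x \<partial>lborel)"
    using em[of "{2*m - t..}"] by (simp add: m_def algebra_simps)
  have le: "(\<integral>\<^sup>+x. f x * indicator {..t} x \<partial>lborel) \<le> (\<integral>\<^sup>+x. f (2*m - x) * indicator {..t} x \<partial>lborel)"
  proof (rule nn_integral_mono)
    fix x :: real
    show "f x * indicator {..t} x \<le> f (2*m - x) * indicator {..t} x"
    proof (cases "x \<le> t")
      case True
      show ?thesis
      proof (cases "0 < x")
        case True
        have "chi_squared_density l x \<le> chi_squared_density l (2*m - x)"
          unfolding m_def using dens_le[of x l] True \<open>x \<le> t\<close> assms(5) by simp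
        then show ?thesis using \<open>x \<le> t\<close> unfolding f_def by (simp add: ennreal_leI)
      next
        case False
        then show ?thesis by (simp add: f_def chi_squared_density_def)
      qed
    qed simp
  qed
  have eq: "(\<integral>\<^sup>+x. f x * indicator {2*m - t..} x \<partial>lborel) = (\<integral>\<^sup>+x. f (2*m - x) * indicator {..t} x \<partial>lborel)"
  proof -
    have "(\<integral>\<^sup>+x. f x * indicator {2*m - t..} x \<partial>lborel)
        = ennreal \<bar>-1\<bar> * (\<integral>\<^sup>+x. f (2*m + (-1) * x) * indicator {2*m - t..} (2*m + (-1) * x) \<partial>lborel)"
      by (rule nn_integral_real_affine) auto
    also have "\<dots> = (\<integral>\<^sup>+x. f (2*m - x) * indicator {..t} x \<partial>lborel)"
      by (auto intro!: nn_integral_cong split: split_indicator)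
    finally show ?thesis .
  qed
  have "emeasure M {\<omega> \<in> space M. X \<omega> \<le> t} \<le> emeasure M {\<omega> \<in> space M. X \<omega> \<ge> 2 * real l - 4 - t}"
    using eA eB le eq by simp
  then show ?thesis unfolding measure_def
    by (rule enn2real_mono) (simp add: less_top[symmetric])
qed

end
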